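(* Let $\Pi=\Pi_1\times\cdots\times\Pi_T$ be a class of dynamic treatment regimes such that for every $t=1,\dots,T$, $N_{d_h}(\epsilon,\Pi_t)\le C\exp(D(1/\epsilon)^\omega)$ for all $\epsilon>0$, for some constants $C,D>0$ and $0<\omega<0.5$. Then $\kappa(\Pi)<\infty$.
   Context: For each stage $t$, $\mathcal{H}_t$ is a history space whose elements are $h_t=(\underline a_{t-1},\underline s_t)$, and for $\ell\le t$ the sub-history $h_\ell=(\underline a_{\ell-1},\underline s_\ell)\in\mathcal{H}_\ell$. $\Pi_t$ is a class of measurable maps $\pi_t:\mathcal{H}_t\to\mathcal{A}_t$ (finite action set); $\Pi_{s:t}=\Pi_s\times\cdots\times\Pi_t$ with elements $\pi_{s:t}=(\pi_s,\dots,\pi_t)$, and $\Pi=\Pi_{1:T}$. Given points $h_t^{(1)},\dots,h_t^{(n)}\in\mathcal{H}_t$, the Hamming distance is $d_h(\pi_{s:t},\pi'_{s:t})=n^{-1}\sum_{i=1}^n\mathbf{1}\{\pi_s(h_s^{(i)})\ne\pi'_s(h_s^{(i)})\vee\cdots\vee\pi_t(h_t^{(i)})\ne\pi'_t(h_t^{(i)})\}$; $N_{d_h}(\epsilon,\Pi_{s:t},\{h_t^{(i)}\})$ is the smallest number of elements of $\Pi_{s:t}$ such that every element of $\Pi_{s:t}$ is within $d_h$-distance $\epsilon$ of one of them; $N_{d_h}(\epsilon,\Pi_{s:t})$ is the supremum of this over all $n\ge1$ and all $h_t^{(1)},\dots,h_t^{(n)}\in\mathcal{H}_t$. The entropy integral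 is $\kappa(\Pi_{s:t})=\int_0^1\sqrt{\log N_{d_h}(\epsilon^2,\Pi_{s:t})}\,d\epsilon$ and $\kappa(\Pi)=\kappa(\Pi_{1:T})$. *)

theory Defs
  imports "HOL-Analysis.Analysis" "HOL-Library.FuncSet"
begin

text \<open>Stages are numbered 1, ..., T. A stage-t history h_t = (a_1..a_{t-1}, s_1..s_t)
  is represented as a pair of lists (actions, states) with the action at stage i
  in A i and the state at stage i in S i.\<close>

type_synonym ('a,'s) history = "'a list \<times> 's list"
type_synonym ('a,'s) policy = "('a,'s) history \<Rightarrow> 'a"

definition hist :: "(nat \<Rightarrow> 's set) \<Rightarrow> (nat \<Rightarrow> 'a set) \<Rightarrow> nat \<Rightarrow> ('a,'s) history set" where
  "hist S A t = {(as, ss). length as = t - 1 \<and> length ss = t \<and>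
      (\<forall>i < t - 1. as ! i \<in> A (Suc i)) \<and> (\<forall>i < t. ss ! i \<in> S (Suc i))}"

definition subhist :: "nat \<Rightarrow> ('a,'s) history \<Rightarrow> ('a,'s) history" where
  "subhist l h = (take (l - 1) (fst h), take l (snd h))"

text \<open>Policy class Pi_{s:t} = Pi_s x ... x Pi_t, tuples as extensional functions on {s..t}.\<close>
definition polclass :: "(nat \<Rightarrow> ('a,'s) policy set) \<Rightarrow> nat \<Rightarrow> nat \<Rightarrow> (nat \<Rightarrow> ('a,'s) policy) set" where
  "polclass Pols s t = PiE {s..t} Pols"

definition hamming :: "nat \<Rightarrow> nat \<Rightarrow> ('a,'s) history list \<Rightarrow>
    (nat \<Rightarrow> ('a,'s) policy) \<Rightarrow> (nat \<Rightarrow> ('a,'s) policy) \<Rightarrow> real" where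
  "hamming s t xs p q = (1 / real (length xs)) *
     (\<Sum>i<length xs. if (\<exists>k\<in>{s..t}. p k (subhist k (xs ! i)) \<noteq> q k (subhist k (xs ! i)))
                     then 1 else 0)"

text \<open>Covering number N_{d_h}(eps, Pi_{s:t}, {h_t^(i)}) (infinite if no finite cover).\<close>
definition covnum_pts :: "real \<Rightarrow> (nat \<Rightarrow> ('a,'s) policy set) \<Rightarrow> nat \<Rightarrow> nat \<Rightarrow>
    ('a,'s) history list \<Rightarrow> ennreal" where
  "covnum_pts eps Pols s t xs =
     (INF C \<in> {C. finite C \<and> C \<subseteq> polclass Pols s t \<and>
                 (\<forall>p \<in> polclass Pols s t. \<exists>c \<in> C. hamming s t xs p c \<le> eps)}.
        of_nat (card C))"

definition covnum :: "(nat \<Rightarrow> 's set) \<Rightarrow> (nat \<Rightarrow> 'a set) \<Rightarrow> real \<Rightarrow>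
    (nat \<Rightarrow> ('a,'s) policy set) \<Rightarrow> nat \<Rightarrow> nat \<Rightarrow> ennreal" where
  "covnum S A eps Pols s t =
     (SUP xs \<in> {xs. xs \<noteq> [] \<and> set xs \<subseteq> hist S A t}. covnum_pts eps Pols s t xs)"

text \<open>Entropy integral kappa(Pi_{s:t}) = int_0^1 sqrt(log N(eps^2, Pi_{s:t})) d eps
  (natural log; value \<infinity> wherever the covering number is infinite).\<close>
definition entropy_integral :: "(nat \<Rightarrow> 's set) \<Rightarrow> (nat \<Rightarrow> 'a set) \<Rightarrow>
    (nat \<Rightarrow> ('a,'s) policy set) \<Rightarrow> nat \<Rightarrow> nat \<Rightarrow> ennreal" where
  "entropy_integral S A Pols s t =
     (\<integral>\<^sup>+ eps \<in> {0..1}.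
        (let N = covnum S A (eps\<^sup>2) Pols s t in
         if N = \<infinity> then \<infinity> else ennreal (sqrt (ln (enn2real N)))) \<partial>lborel)"

end

theory Submission
  imports Defs
begin

lemma subhist_idem: "subhist k (subhist k h) = subhist k h"
  by (simp add: subhist_def)

lemma subhist_hist:
  assumes "h \<in> hist S A T" "t \<le> T"
  shows "subhist t h \<in> hist S A t"
  using assms by (auto simp: hist_def subhist_def)

lemma cover_exists:
  assumes "covnum_pts eps Pols s t ys \<le> ennreal K" "K \<ge> 0"
  shows "\<exists>Cv. finite Cv \<and> Cv \<subseteq> polclass Pols s t \<and>
     (\<forall>p\<in>polclass Pols s t. \<exists>c\<in>Cv. hamming s t ys p c \<le> eps) \<and> real (card Cv) \<le> K"
proof -
  define F where "F = {C. finite C \<and> C \<subseteq> polclass Pols s t \<and>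
                 (\<forall>p \<in> polclass Pols s t. \<exists>c \<in> C. hamming s t ys p c \<le> eps)}"
  have cn: "covnum_pts eps Pols s t ys = (INF C\<in>F. of_nat (card C))"
    by (simp add: covnum_pts_def F_def)
  have "F \<noteq> {}"
  proof
    assume "F = {}"
    then have "covnum_pts eps Pols s t ys = top" using cn by simp
    then show False using assms(1) by (metis ennreal_neq_top top_unique)
  qed
  then have ex: "\<exists>n. \<exists>C\<in>F. card C = n" by blast
  define n where "n = (LEAST n. \<exists>C\<in>F. card C = n)"
  obtain C0 where C0: "C0 \<in> F" "card C0 = n" using LeastI_ex[OF ex] n_def by blast
  have "of_nat n \<le> covnum_pts eps Pols s t ys"
    unfolding cn
  proof (rule INF_greatest)
    fix C assume "C \<in> F"
    then have "n \<le> card C" unfolding n_def by (intro Least_le) blast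
    then show "(of_nat n :: ennreal) \<le> of_nat (card C)" by simp
  qed
  then have "ennreal (real n) \<le> ennreal K" using assms(1)
    by (metis ennreal_of_nat_eq_real_of_nat order_trans)
  then have "real n \<le> K" using assms(2) by (simp add: ennreal_le_iff)
  then show ?thesis using C0 unfolding F_def by blast
qed

lemma hamming_single:
  "hamming k k (map (subhist k) xs) q r =
   (1 / real (length xs)) * (\<Sum>i<length xs. if q k (subhist k (xs ! i)) \<noteq> r k (subhist k (xs ! i)) then 1 else 0)"
  by (simp add: hamming_def subhist_idem)

lemma hamming_prod_le:
  fixes p q :: "nat \<Rightarrow> ('a,'s) policy"
  shows "hamming 1 T xs p q \<le> (\<Sum>k\<in>{1..T}. hamming k k (map (subhist k) xs) p q)"
proof -
  let ?I = "\<lambda>k i. (if p k (subhist k (xs ! i)) \<noteq> q k (subhist k (xs ! i)) then 1 else 0 :: real)"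
  have "(\<Sum>i<length xs. if (\<exists>k\<in>{1..T}. p k (subhist k (xs ! i)) \<noteq> q k (subhist k (xs ! i))) then 1 else 0)
      \<le> (\<Sum>i<length xs. \<Sum>k\<in>{1..T}. ?I k i)"
  proof (rule sum_mono)
    fix i assume "i \<in> {..<length xs}"
    show "(if (\<exists>k\<in>{1..T}. p k (subhist k (xs ! i)) \<noteq> q k (subhist k (xs ! i))) then 1 else 0) \<le> (\<Sum>k\<in>{1..T}. ?I k i)"
    proof (cases "\<exists>k\<in>{1..T}. p k (subhist k (xs ! i)) \<noteq> q k (subhist k (xs ! i))")
      case True
      then obtain k where k: "k \<in> {1..T}" "p k (subhist k (xs ! i)) \<noteq> q k (subhist k (xs ! i))" by blast
      have "?I k i \<le> (\<Sum>k\<in>{1..T}. ?I k i)"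
        by (rule member_le_sum) (use k in auto)
      then show ?thesis using True k by simp
    next
      case False
      then show ?thesis by (simp add: sum_nonneg)
    qed
  qed
  then have "hamming 1 T xs p q \<le> (1 / real (length xs)) * (\<Sum>i<length xs. \<Sum>k\<in>{1..T}. ?I k i)"
    unfolding hamming_def by (intro mult_left_mono) auto
  also have "\<dots> = (\<Sum>k\<in>{1..T}. (1 / real (length xs)) * (\<Sum>i<length xs. ?I k i))"
    by (simp add: sum.swap[of _ "{..<length xs}"] sum_distrib_left)
  also have "\<dots> = (\<Sum>k\<in>{1..T}. hamming k k (map (subhist k) xs) p q)"
    by (simp add: hamming_single)
  finally show ?thesis .
qed

lemma hamming_restrict:
  assumes "k \<in> I"
  shows "hamming k k ys (restrict p I) q = hamming k k ys p q"
        "hamming k k ys q (restrict p I) = hamming k k ys q p"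
  using assms by (simp_all add: hamming_def)

lemma prod_cover:
  fixes Pols :: "nat \<Rightarrow> ('a,'s) policy set"
  assumes eps: "eps \<ge> 0" and K: "K \<ge> 0" and xs: "xs \<noteq> []" "set xs \<subseteq> hist S A T"
    and hyp: "\<forall>t\<in>{1..T}. covnum S A (eps / T) Pols t t \<le> ennreal K"
  shows "covnum_pts eps Pols 1 T xs \<le> ennreal (K ^ T)"
proof -
  have "\<forall>t\<in>{1..T}. \<exists>Cv. finite Cv \<and> Cv \<subseteq> polclass Pols t t \<and>
     (\<forall>p\<in>polclass Pols t t. \<exists>c\<in>Cv. hamming t t (map (subhist t) xs) p c \<le> eps / T) \<and> real (card Cv) \<le> K"
  proof
    fix t assume t: "t \<in> {1..T}"
    have "covnum_pts (eps / T) Pols t t (map (subhist t) xs) \<le> covnum S A (eps / T) Pols t t"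
      unfolding covnum_def
      by (rule SUP_upper) (use xs t in \<open>auto intro!: subhist_hist\<close>)
    also have "\<dots> \<le> ennreal K" using hyp t by blast
    finally show "\<exists>Cv. finite Cv \<and> Cv \<subseteq> polclass Pols t t \<and>
     (\<forall>p\<in>polclass Pols t t. \<exists>c\<in>Cv. hamming t t (map (subhist t) xs) p c \<le> eps / T) \<and> real (card Cv) \<le> K"
      by (rule cover_exists[OF _ K])
  qed
  then obtain Cs where Cs: "\<And>t. t \<in> {1..T} \<Longrightarrow> finite (Cs t) \<and> Cs t \<subseteq> polclass Pols t t \<and>
     (\<forall>p\<in>polclass Pols t t. \<exists>c\<in>Cs t. hamming t t (map (subhist t) xs) p c \<le> eps / T) \<and> real (card (Cs t)) \<le> K"
    by metis
  define g where "g = (\<lambda>f::nat \<Rightarrow> nat \<Rightarrow> ('a,'s) policy. restrict (\<lambda>k. f k k) {1..T})"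
  define Cv where "Cv = g ` PiE {1..T} Cs"
  have finPi: "finite (PiE {1..T} Cs)" using Cs by (intro finite_PiE) auto
  then have fin: "finite Cv" unfolding Cv_def by simp
  have "card Cv \<le> card (PiE {1..T} Cs)" unfolding Cv_def using finPi by (rule card_image_le)
  also have "\<dots> = (\<Prod>t\<in>{1..T}. card (Cs t))" by (simp add: card_PiE)
  finally have "real (card Cv) \<le> (\<Prod>t\<in>{1..T}. real (card (Cs t)))"
    by (metis of_nat_le_iff of_nat_prod)
  also have "\<dots> \<le> (\<Prod>t\<in>{1..T}. K)" using Cs by (intro prod_mono) auto
  finally have cardle: "real (card Cv) \<le> K ^ T" by simp
  have sub: "Cv \<subseteq> polclass Pols 1 T"
  proof
    fix q assume "q \<in> Cv"
    then obtain f where f: "f \<in> PiE {1..T} Cs" "q = g f" unfolding Cv_def by blast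
    have "f k k \<in> Pols k" if "k \<in> {1..T}" for k
    proof -
      have "f k \<in> Cs k" using f(1) that by auto
      then have "f k \<in> PiE {k} Pols" using Cs[OF that] by (auto simp: polclass_def)
      then show ?thesis by auto
    qed
    then show "q \<in> polclass Pols 1 T" using f(2) by (auto simp: polclass_def g_def)
  qed
  have cov: "\<forall>p\<in>polclass Pols 1 T. \<exists>c\<in>Cv. hamming 1 T xs p c \<le> eps"
  proof
    fix p assume p: "p \<in> polclass Pols 1 T"
    have "\<forall>t\<in>{1..T}. \<exists>c\<in>Cs t. hamming t t (map (subhist t) xs) p c \<le> eps / T"
    proof
      fix t assume t: "t \<in> {1..T}"
      have "restrict p {t} \<in> polclass Pols t t" using p t by (auto simp: polclass_def)
      then obtain c where "c \<in> Cs t" "hamming t t (map (subhist t) xs) (restrict p {t}) c \<le> eps / T"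
        using Cs[OF t] by blast
      then show "\<exists>c\<in>Cs t. hamming t t (map (subhist t) xs) p c \<le> eps / T"
        using hamming_restrict(1)[of t "{t}" "map (subhist t) xs" p c] by auto
    qed
    then obtain c where c: "\<And>t. t \<in> {1..T} \<Longrightarrow> c t \<in> Cs t \<and> hamming t t (map (subhist t) xs) p (c t) \<le> eps / T"
      by metis
    define f where "f = restrict c {1..T}"
    have fP: "f \<in> PiE {1..T} Cs" using c by (auto simp: f_def)
    have "hamming 1 T xs p (g f) \<le> (\<Sum>k\<in>{1..T}. hamming k k (map (subhist k) xs) p (g f))"
      by (rule hamming_prod_le)
    also have "\<dots> = (\<Sum>k\<in>{1..T}. hamming k k (map (subhist k) xs) p (c k))"
    proof (rule sum.cong)
      fix k assume k: "k \<in> {1..T}"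
      show "hamming k k (map (subhist k) xs) p (g f) = hamming k k (map (subhist k) xs) p (c k)"
        using k by (simp add: hamming_def g_def f_def)
    qed simp
    also have "\<dots> \<le> (\<Sum>k\<in>{1..T}. eps / T)" using c by (intro sum_mono) auto
    also have "\<dots> \<le> eps" using eps by auto
    finally show "\<exists>c\<in>Cv. hamming 1 T xs p c \<le> eps" using fP unfolding Cv_def by blast
  qed
  have "covnum_pts eps Pols 1 T xs \<le> of_nat (card Cv)"
    unfolding covnum_pts_def by (rule INF_lower) (use fin sub cov in blast)
  also have "\<dots> \<le> ennreal (K ^ T)"
    using cardle by (simp add: ennreal_of_nat_eq_real_of_nat ennreal_leI)
  finally show ?thesis .
qed

lemma prod_covnum:
  fixes Pols :: "nat \<Rightarrow> ('a,'s) policy set"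
  assumes eps: "eps \<ge> 0" and K: "K \<ge> 0"
    and hyp: "\<forall>t\<in>{1..T}. covnum S A (eps / T) Pols t t \<le> ennreal K"
  shows "covnum S A eps Pols 1 T \<le> ennreal (K ^ T)"
  unfolding covnum_def using prod_cover[OF eps K _ _ hyp] by (auto intro: SUP_least)

lemma pow_identity:
  fixes e T w :: real
  assumes "e > 0" "T > 0"
  shows "(1 / (e\<^sup>2 / T)) powr w = T powr w * (e powr (-w))\<^sup>2"
proof -
  have "(1 / (e\<^sup>2 / T)) powr w = (T / e\<^sup>2) powr w" by simp
  also have "\<dots> = T powr w / (e\<^sup>2) powr w" using assms by (simp add: powr_divide)
  also have "(e\<^sup>2) powr w = (e powr w)\<^sup>2" using assms
    by (simp add: powr_powr[symmetric] powr_realpow[symmetric] powr_mult_base power2_eq_square powr_add[symmetric])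
  finally show ?thesis using assms by (simp add: powr_minus divide_inverse power_inverse)
qed

lemma integral_bound_fin:
  fixes a b w :: real
  assumes "0 \<le> w" "w < 1" "a \<ge> 0" "b \<ge> 0"
  shows "(\<integral>\<^sup>+ x. ennreal (a + b * x powr (-w)) * indicator {0..1} x \<partial>lborel) < \<infinity>"
proof -
  have h1: "((\<lambda>x. x powr (-w)) has_integral (1 powr (-w+1) / (-w+1))) {0..1::real}"
    using assms by (intro has_integral_powr_from_0) auto
  obtain I where I: "((\<lambda>x. a + b * x powr (-w)) has_integral I) {0..1::real}"
    using has_integral_add[OF has_integral_const_real has_integral_mult_right[OF h1]] by blast
  have "(\<integral>\<^sup>+ x. ennreal (a + b * x powr (-w)) * indicator {0..1} x \<partial>lborel) = ennreal I"
    using I assms by (intro nn_integral_has_integral_lebesgue') auto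
  then show ?thesis by simp
qed

theorem lemma2:
  fixes S :: "nat \<Rightarrow> 's set" and A :: "nat \<Rightarrow> 'a set"
    and Pols :: "nat \<Rightarrow> ('a,'s) policy set" and T :: nat
    and C D \<omega> :: real
  assumes "\<forall>t\<in>{1..T}. finite (A t)"
    and "\<forall>t\<in>{1..T}. \<forall>p\<in>Pols t. \<forall>h\<in>hist S A t. p h \<in> A t"
    and "C > 0" and "D > 0" and "0 < \<omega>" and "\<omega> < 0.5"
    and "\<forall>t\<in>{1..T}. \<forall>eps>0.
           covnum S A eps Pols t t \<le> ennreal (C * exp (D * (1 / eps) powr \<omega>))"
  shows "entropy_integral S A Pols 1 T < \<infinity>"
proof -
  note hC = assms(3) and hD = assms(4) and hw = assms(5,6) and hyp = assms(7)
  define a where "a = real T * \<bar>ln C\<bar>"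
  define b where "b = real T * D * real T powr \<omega>"
  have a0: "a \<ge> 0" and b0: "b \<ge> 0" using hD by (auto simp: a_def b_def)
  define f where "f = (\<lambda>eps::real. (let N = covnum S A (eps\<^sup>2) Pols 1 T in
         if N = \<infinity> then \<infinity> else ennreal (sqrt (ln (enn2real N)))))"
  have pt: "f e \<le> ennreal (sqrt a + sqrt b * e powr (-\<omega>))" if e: "0 < e" for e
  proof -
    define K where "K = C * exp (D * (1 / (e\<^sup>2 / real T)) powr \<omega>)"
    have K0: "K > 0" using hC by (simp add: K_def)
    have hh: "\<forall>t\<in>{1..T}. covnum S A (e\<^sup>2 / real T) Pols t t \<le> ennreal K"
    proof
      fix t assume t: "t \<in> {1..T}"
      then have "e\<^sup>2 / real T > 0" using e by auto
      then show "covnum S A (e\<^sup>2 / real T) Pols t t \<le> ennreal K"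
        using hyp t unfolding K_def by blast
    qed
    have Nle: "covnum S A (e\<^sup>2) Pols 1 T \<le> ennreal (K ^ T)"
      by (rule prod_covnum[OF _ _ hh]) (use K0 in auto)
    define N where "N = covnum S A (e\<^sup>2) Pols 1 T"
    have Nfin: "N \<noteq> \<infinity>" using Nle unfolding N_def
      by (metis ennreal_neq_top infinity_ennreal_def top_unique)
    have NR: "enn2real N \<le> K ^ T" using Nle K0 unfolding N_def by (intro enn2real_leI) auto
    have N0: "enn2real N \<ge> 0" by simp
    define y where "y = e powr (-\<omega>)"
    have y0: "y \<ge> 0" by (simp add: y_def)
    have lnle: "ln (enn2real N) \<le> a + b * y\<^sup>2"
    proof (cases "enn2real N \<le> 1")
      case True
      have "ln (enn2real N) \<le> 0"
      proof (cases "enn2real N = 0")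
        case False
        then have "0 < enn2real N" using N0 by linarith
        then show ?thesis using True by simp
      qed simp
      also have "0 \<le> a + b * y\<^sup>2" using a0 b0 by simp
      finally show ?thesis .
    next
      case False
      then have "ln (enn2real N) \<le> ln (K ^ T)" using NR by simp
      also have "\<dots> = real T * ln K" using K0 by (simp add: ln_realpow)
      also have "\<dots> = real T * (ln C + D * (1 / (e\<^sup>2 / real T)) powr \<omega>)"
        using hC by (simp add: K_def ln_mult)
      also have "\<dots> \<le> a + b * y\<^sup>2"
      proof (cases "T = 0")
        case True then show ?thesis using a0 b0 by simp
      next
        case False
        then have "(1 / (e\<^sup>2 / real T)) powr \<omega> = real T powr \<omega> * y\<^sup>2"
          unfolding y_def using e by (intro pow_identity) auto
        then show ?thesis unfolding a_def b_def
          by (simp add: algebra_simps mult_left_mono)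
      qed
      finally show ?thesis .
    qed
    have "sqrt (ln (enn2real N)) \<le> sqrt (a + b * y\<^sup>2)" using lnle by simp
    also have "\<dots> \<le> sqrt a + sqrt (b * y\<^sup>2)" using a0 b0 by (intro sqrt_add_le_add_sqrt) auto
    also have "sqrt (b * y\<^sup>2) = sqrt b * y" using y0 by (simp add: real_sqrt_mult)
    finally have "sqrt (ln (enn2real N)) \<le> sqrt a + sqrt b * y" .
    then show ?thesis unfolding f_def N_def[symmetric] Let_def y_def using Nfin
      by (simp add: ennreal_leI)
  qed
  have "entropy_integral S A Pols 1 T = (\<integral>\<^sup>+ x. f x * indicator {0..1} x \<partial>lborel)"
    unfolding entropy_integral_def f_def by simp
  also have "\<dots> \<le> (\<integral>\<^sup>+ x. ennreal (sqrt a + sqrt b * x powr (-\<omega>)) * indicator {0..1} x \<partial>lborel)"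
  proof (rule nn_integral_mono_AE)
    show "AE x in lborel. f x * indicator {0..1} x \<le> ennreal (sqrt a + sqrt b * x powr (-\<omega>)) * indicator {0..1} x"
    proof -
      have ae: "AE x in lborel. x \<notin> {0::real}"
        by (intro AE_not_in countable_imp_null_set_lborel) auto
      from ae show ?thesis
    proof eventually_elim
      case (elim x)
      show ?case
      proof (cases "x \<in> {0..1}")
        case True
        then have "x > 0" using elim by auto
        then show ?thesis using pt True by simp
      qed simp
    qed
    qed
  qed
  also have "\<dots> < \<infinity>" using hw a0 b0 by (intro integral_bound_fin) auto
  finally show ?thesis .
qed

end
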